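(* Let $a,b>0$, $\alpha\in(0,3)$, $p>2$, and $h(x)\ge h_0>0$ on $\mathbb{Z}^3$. Then (i) there exist $\theta,\rho>0$ such that $J(u)\ge\theta>0$ for all $u\in H$ with $\|u\|=\rho$; (ii) there exists $e\in H$ with $\|e\|>\rho$ and $J(e)<0$.
   Context: $\mathbb{Z}^3$ is the integer lattice graph ($x\sim y$ iff $\sum_i|x_i-y_i|=1$) with counting measure $\mu$. $|\nabla u|(x)=\big(\tfrac12\sum_{y\sim x}(u(y)-u(x))^2\big)^{1/2}$. $R_\alpha(x,y)=\frac{K_\alpha}{(2\pi)^3}\int_{\mathbb{T}^3}e^{i(x-y)\cdot k}\mu(k)^{-\alpha/2}dk$, $K_\alpha=\frac{1}{(2\pi)^3}\int_{\mathbb{T}^3}\mu(k)^{\alpha/2}dk$, $\mu(k)=6-2\sum_j\cos k_j$, $\mathbb{T}^3=[0,2\pi]^3$; $(R_\alpha\ast f)(x)=\sum_yR_\alpha(x,y)f(y)$. $H=\{u\in H^1(\mathbb{Z}^3):\sum hu^2<\infty\}$ with $\|u\|^2=\sum_x(a|\nabla u|^2+hu^2)$, $H^1(\mathbb{Z}^3)$ being the completion of finitely supported functions under $\sum(|\nabla u|^2+u^2)$. $J(u)=\frac12\|u\|^2+\frac b4(\sum|\nabla u|^2)^2-\frac1{2p}\sum(R_\alpha\ast|u|^p)|u|^p$. *)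

theory Defs
  imports "HOL-Analysis.Analysis"
begin

type_synonym lat = "int \<times> int \<times> int"

definition adj :: "lat \<Rightarrow> lat \<Rightarrow> bool" where
  "adj x y \<longleftrightarrow> \<bar>fst x - fst y\<bar> + \<bar>fst (snd x) - fst (snd y)\<bar>
                 + \<bar>snd (snd x) - snd (snd y)\<bar> = 1"

definition grad_norm :: "(lat \<Rightarrow> real) \<Rightarrow> lat \<Rightarrow> real" where
  "grad_norm u x = sqrt ((1/2) * (\<Sum>y\<in>{y. adj x y}. (u y - u x)^2))"

definition fin_supp :: "(lat \<Rightarrow> real) \<Rightarrow> bool" where
  "fin_supp f \<longleftrightarrow> finite {x. f x \<noteq> 0}"

text \<open>H^1(Z^3): completion (closure, realised inside functions on Z^3) of the
finitely supported functions w.r.t. the norm (sum (|grad u|^2 + u^2))^(1/2).\<close>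
definition H1 :: "(lat \<Rightarrow> real) set" where
  "H1 = {u. (\<lambda>x. (grad_norm u x)^2 + (u x)^2) summable_on UNIV \<and>
            (\<exists>f :: nat \<Rightarrow> lat \<Rightarrow> real. (\<forall>n. fin_supp (f n)) \<and>
               (\<forall>n. (\<lambda>x. (grad_norm (\<lambda>z. u z - f n z) x)^2 + (u x - f n x)^2) summable_on UNIV) \<and>
               (\<lambda>n. \<Sum>\<^sub>\<infinity>x. (grad_norm (\<lambda>z. u z - f n z) x)^2 + (u x - f n x)^2)
                  \<longlonglongrightarrow> 0)}"

definition Hsp :: "real \<Rightarrow> (lat \<Rightarrow> real) \<Rightarrow> (lat \<Rightarrow> real) set" where
  "Hsp a h = {u \<in> H1. (\<lambda>x. h x * (u x)^2) summable_on UNIV}"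

definition Hnorm :: "real \<Rightarrow> (lat \<Rightarrow> real) \<Rightarrow> (lat \<Rightarrow> real) \<Rightarrow> real" where
  "Hnorm a h u = sqrt (\<Sum>\<^sub>\<infinity>x. a * (grad_norm u x)^2 + h x * (u x)^2)"

definition symb :: "real \<times> real \<times> real \<Rightarrow> real" where
  "symb k = 6 - 2 * (cos (fst k) + cos (fst (snd k)) + cos (snd (snd k)))"

definition torus :: "(real \<times> real \<times> real) set" where
  "torus = {0..2*pi} \<times> {0..2*pi} \<times> {0..2*pi}"

definition K_const :: "real \<Rightarrow> real" where
  "K_const \<alpha> = (1 / (2*pi)^3) * (LINT k:torus|lborel. symb k powr (\<alpha>/2))"

definition ldot :: "lat \<Rightarrow> real \<times> real \<times> real \<Rightarrow> real" where
  "ldot z k = real_of_int (fst z) * fst k + real_of_int (fst (snd z)) * fst (snd k)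
             + real_of_int (snd (snd z)) * snd (snd k)"

text \<open>R_alpha(x,y) as the (complex) Fourier integral of the paper; it is real-valued
(the imaginary part vanishes by symmetry), so we take the real part.\<close>
definition R_c :: "real \<Rightarrow> lat \<Rightarrow> lat \<Rightarrow> complex" where
  "R_c \<alpha> x y = complex_of_real (K_const \<alpha> / (2*pi)^3) *
     (LINT k:torus|lborel. cis (ldot (x - y) k) * complex_of_real (symb k powr (-\<alpha>/2)))"

definition R_alpha :: "real \<Rightarrow> lat \<Rightarrow> lat \<Rightarrow> real" where
  "R_alpha \<alpha> x y = Re (R_c \<alpha> x y)"

definition conv :: "real \<Rightarrow> (lat \<Rightarrow> real) \<Rightarrow> lat \<Rightarrow> real" where
  "conv \<alpha> f x = (\<Sum>\<^sub>\<infinity>y. R_alpha \<alpha> x y * f y)"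

definition Jfun :: "real \<Rightarrow> real \<Rightarrow> real \<Rightarrow> real \<Rightarrow> (lat \<Rightarrow> real) \<Rightarrow> (lat \<Rightarrow> real) \<Rightarrow> real" where
  "Jfun a b \<alpha> p h u =
     (1/2) * (Hnorm a h u)^2
     + (b/4) * (\<Sum>\<^sub>\<infinity>x. (grad_norm u x)^2)^2
     - (1/(2*p)) * (\<Sum>\<^sub>\<infinity>x. conv \<alpha> (\<lambda>y. \<bar>u y\<bar> powr p) x * \<bar>u x\<bar> powr p)"

end

theory Submission
  imports Defs
begin
lemma cos_le4: "cos (x::real) \<le> 1 - x^2/2 + x^4/24"
proof -
  obtain t where t: "cos x = (\<Sum>m<4. cos_coeff m * x ^ m) + (cos(t + 1/2 * real 4 * pi) / fact 4) * x ^ 4"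
    using Maclaurin_cos_expansion[of x 4] by blast
  have s: "(\<Sum>m<4. cos_coeff m * x ^ m) = 1 - x^2/2"
    by (simp add: numeral_eq_Suc cos_coeff_def del: One_nat_def) (simp add: dvd_def; presburger)
  have "cos(t + 1/2 * real 4 * pi) / fact 4 * x ^ 4 \<le> x^4/24"
  proof -
    have "cos(t + 1/2 * real 4 * pi) * x^4 \<le> 1 * x^4" by (intro mult_right_mono) auto
    moreover have "(fact 4::real) = 24" by (simp add: numeral_eq_Suc)
    ultimately show ?thesis by simp
  qed
  then show ?thesis using t s by linarith
qed
lemma one_minus_cos: assumes "0 \<le> (x::real)" "x \<le> pi" shows "x^2/12 \<le> 1 - cos x"
proof -
  have "x^2 \<le> pi^2" using assms by (simp add: power_mono)
  also have "pi^2 < 10"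
  proof -
    have p: "pi \<le> 3.15" using pi_approx by simp
    have "pi * pi \<le> 3.15 * 3.15" by (rule mult_mono[OF p p]) auto
    then show ?thesis by (simp add: power2_eq_square)
  qed
  finally have "x^2 < 10" .
  have "x^2/12 \<le> x^2/2 - x^4/24"
  proof -
    have "x^4 = x^2 * x^2" by algebra
    moreover have "x^2 * x^2 \<le> x^2 * 10" using \<open>x^2 < 10\<close> by (intro mult_left_mono) auto
    ultimately show ?thesis by simp
  qed
  then show ?thesis using cos_le4[of x] by linarith
qed

lemma nn_prod:
  fixes f :: "real \<Rightarrow> ennreal" and g :: "'b::euclidean_space \<Rightarrow> ennreal"
  assumes [measurable]: "f \<in> borel_measurable borel" "g \<in> borel_measurable borel"
  shows "(\<integral>\<^sup>+k. f (fst k) * g (snd k) \<partial>lborel) = (\<integral>\<^sup>+x. f x \<partial>lborel) * (\<integral>\<^sup>+y. g y \<partial>lborel)"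
proof -
  have "(\<integral>\<^sup>+k. f (fst k) * g (snd k) \<partial>lborel) = (\<integral>\<^sup>+k. f (fst k) * g (snd k) \<partial>(lborel \<Otimes>\<^sub>M lborel))"
    by (simp add: lborel_prod)
  also have "\<dots> = (\<integral>\<^sup>+x. \<integral>\<^sup>+y. f x * g y \<partial>lborel \<partial>lborel)"
    by (subst lborel.nn_integral_fst[symmetric]) auto
  also have "\<dots> = (\<integral>\<^sup>+x. f x * (\<integral>\<^sup>+y. g y \<partial>lborel) \<partial>lborel)"
    by (simp add: nn_integral_cmult)
  also have "\<dots> = (\<integral>\<^sup>+x. f x \<partial>lborel) * (\<integral>\<^sup>+y. g y \<partial>lborel)"
    by (simp add: nn_integral_multc)
  finally show ?thesis .
qed

lemma powr_int_fin:
  assumes "0 < \<beta>" "\<beta> < 1"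
  shows "(\<integral>\<^sup>+t. ennreal (t powr (-\<beta>)) * indicator {0..2*pi} t \<partial>lborel) < \<infinity>"
proof -
  have "(\<integral>\<^sup>+t. ennreal (t powr (-\<beta>)) * indicator {0..2*pi} t \<partial>lborel) = ennreal ((2*pi) powr (-\<beta>+1) / (-\<beta>+1))"
    by (rule nn_integral_has_integral_lebesgue'[OF _ has_integral_powr_from_0]) (use assms in auto)
  then show ?thesis by simp
qed

lemma powr_int_fin2:
  assumes "0 < \<beta>" "\<beta> < 1"
  shows "(\<integral>\<^sup>+t. ennreal ((2*pi - t) powr (-\<beta>)) * indicator {0..2*pi} t \<partial>lborel) < \<infinity>"
proof -
  have "(\<integral>\<^sup>+t. ennreal ((2*pi - t) powr (-\<beta>)) * indicator {0..2*pi} t \<partial>lborel)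
     = ennreal \<bar>-1\<bar> * (\<integral>\<^sup>+t. ennreal ((2*pi - (2*pi + (-1) * t)) powr (-\<beta>)) * indicator {0..2*pi} (2*pi + (-1)*t) \<partial>lborel)"
    by (rule nn_integral_real_affine) auto
  also have "\<dots> = (\<integral>\<^sup>+t. ennreal (t powr (-\<beta>)) * indicator {0..2*pi} t \<partial>lborel)"
    by (auto intro!: nn_integral_cong simp: indicator_def)
  finally show ?thesis using powr_int_fin[OF assms] by simp
qed

definition Phi :: "real \<Rightarrow> real \<Rightarrow> ennreal" where
  "Phi \<beta> t = (if 0 < t \<and> t < 2*pi then ennreal (t powr (-\<beta>) + (2*pi - t) powr (-\<beta>))
     else if t = 0 \<or> t = 2*pi then \<infinity> else 0)"

lemma Phi_meas[measurable]: "Phi \<beta> \<in> borel_measurable borel"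
  unfolding Phi_def by measurable

lemma Phi_fin: assumes "0 < \<beta>" "\<beta> < 1" shows "(\<integral>\<^sup>+t. Phi \<beta> t \<partial>lborel) < \<infinity>"
proof -
  have "(\<integral>\<^sup>+t. Phi \<beta> t \<partial>lborel) = (\<integral>\<^sup>+t. ennreal (t powr (-\<beta>)) * indicator {0..2*pi} t
       + ennreal ((2*pi - t) powr (-\<beta>)) * indicator {0..2*pi} t \<partial>lborel)"
  proof (rule nn_integral_cong_AE)
    show "AE t in lborel. Phi \<beta> t = ennreal (t powr (-\<beta>)) * indicator {0..2*pi} t
       + ennreal ((2*pi - t) powr (-\<beta>)) * indicator {0..2*pi} t"
      by (rule AE_I'[OF finite_imp_null_set_lborel[of "{0, 2*pi}"]])
         (auto simp: Phi_def indicator_def ennreal_plus)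
  qed
  also have "\<dots> = (\<integral>\<^sup>+t. ennreal (t powr (-\<beta>)) * indicator {0..2*pi} t \<partial>lborel)
       + (\<integral>\<^sup>+t. ennreal ((2*pi - t) powr (-\<beta>)) * indicator {0..2*pi} t \<partial>lborel)"
    by (rule nn_integral_add) auto
  finally show ?thesis using powr_int_fin[OF assms] powr_int_fin2[OF assms] by (simp add: ennreal_add_less_top)
qed

definition dd :: "real \<Rightarrow> real" where "dd t = min t (2*pi - t)"

lemma dd_bound: assumes "0 < t" "t < 2*pi"
  shows "0 < dd t" "dd t ^2 / 12 \<le> 1 - cos t"
    "dd t powr (-\<beta>) \<le> t powr (-\<beta>) + (2*pi - t) powr (-\<beta>)"
proof -
  show "0 < dd t" using assms by (simp add: dd_def)
  show "dd t ^2 / 12 \<le> 1 - cos t"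
  proof (cases "t \<le> pi")
    case True then show ?thesis using one_minus_cos[of t] assms by (simp add: dd_def)
  next
    case False
    have "cos t = cos (2*pi - t)" by simp
    then show ?thesis using one_minus_cos[of "2*pi - t"] assms False by (simp add: dd_def)
  qed
  show "dd t powr (-\<beta>) \<le> t powr (-\<beta>) + (2*pi - t) powr (-\<beta>)"
    by (simp add: dd_def min_def add_increasing add_increasing2)
qed

lemma geo3: fixes x y z :: real assumes "0<x" "0<y" "0<z" "0 < c"
  shows "(x^2+y^2+z^2) powr (-c/2) \<le> (x*y*z) powr (-c/3)"
proof -
  define S where "S = x^2+y^2+z^2"
  define P where "P = x*y*z"
  have S: "S > 0" "x^2 \<le> S" "y^2 \<le> S" "z^2 \<le> S" using assms by (auto simp: S_def add_pos_nonneg)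
  have P: "P > 0" using assms by (simp add: P_def)
  have "P^2 = x^2*y^2*z^2" by (simp add: P_def power_mult_distrib)
  also have "\<dots> \<le> S*S*S" using S by (intro mult_mono) auto
  also have "\<dots> = S^3" by (simp add: power3_eq_cube)
  finally have PS: "P^2 \<le> S^3" .
  have e1: "P powr (2/3) = (P^2) powr (1/3)"
  proof -
    have "P^2 = P powr 2" using powr_realpow[OF P, of 2] by simp
    then show ?thesis by (simp add: powr_powr)
  qed
  have e2: "(S^3) powr (1/3) = S"
  proof -
    have h: "S^3 = S powr 3" using powr_realpow[OF S(1), of 3] by simp
    have "(S powr 3) powr (1/3) = S powr (3 * (1/3))" by (rule powr_powr)
    also have "\<dots> = S" using S(1) by simp
    finally have X: "(S powr 3) powr (1/3) = S" .
    show ?thesis unfolding h by (rule X)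
  qed
  have "P powr (2/3) \<le> S" unfolding e1 using powr_mono2[of "1/3" "P^2" "S^3"] PS e2 by simp
  then have "S powr (-c/2) \<le> (P powr (2/3)) powr (-c/2)"
    using P assms by (intro powr_mono2') auto
  also have "\<dots> = P powr (-c/3)" by (simp add: powr_powr)
  finally show ?thesis by (simp add: S_def P_def)
qed

lemma symb_bound:
  assumes "0 < \<alpha>" "\<alpha> < 3" and k: "0 < fst k" "fst k < 2*pi" "0 < fst (snd k)" "fst (snd k) < 2*pi"
     "0 < snd (snd k)" "snd (snd k) < 2*pi"
  shows "symb k powr (-\<alpha>/2) \<le> 6 powr (\<alpha>/2) *
     ((fst k powr (-(\<alpha>/3)) + (2*pi - fst k) powr (-(\<alpha>/3))) *
      (fst (snd k) powr (-(\<alpha>/3)) + (2*pi - fst (snd k)) powr (-(\<alpha>/3))) *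
      (snd (snd k) powr (-(\<alpha>/3)) + (2*pi - snd (snd k)) powr (-(\<alpha>/3))))"
proof -
  obtain a b c where abc: "k = (a,b,c)" by (metis prod.collapse)
  have a: "0 < a" "a < 2*pi" and b: "0 < b" "b < 2*pi" and c: "0 < c" "c < 2*pi" using k by (auto simp: abc)
  define S where "S = dd a^2 + dd b^2 + dd c^2"
  have Spos: "S/6 > 0" using dd_bound(1)[OF a] by (simp add: S_def add_pos_nonneg)
  have "S/6 \<le> symb k"
    using dd_bound(2)[OF a] dd_bound(2)[OF b] dd_bound(2)[OF c] by (simp add: symb_def abc S_def)
  then have "symb k powr (-\<alpha>/2) \<le> (S/6) powr (-\<alpha>/2)"
    using Spos assms by (intro powr_mono2') auto
  also have "\<dots> = 6 powr (\<alpha>/2) * S powr (-\<alpha>/2)"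
  proof -
    have "(S/6) powr (-\<alpha>/2) = S powr (-\<alpha>/2) / 6 powr (-\<alpha>/2)" by (rule powr_divide)
    moreover have "6 powr (-\<alpha>/2) = 1 / 6 powr (\<alpha>/2)"
      using powr_minus_divide[of 6 "\<alpha>/2"] by simp
    ultimately show ?thesis by simp
  qed
  also have "\<dots> \<le> 6 powr (\<alpha>/2) * (dd a * dd b * dd c) powr (-\<alpha>/3)"
    unfolding S_def
    by (rule mult_left_mono[OF geo3[OF dd_bound(1)[OF a] dd_bound(1)[OF b] dd_bound(1)[OF c] assms(1)]]) simp
  also have "(dd a * dd b * dd c) powr (-\<alpha>/3) = dd a powr (-(\<alpha>/3)) * dd b powr (-(\<alpha>/3)) * dd c powr (-(\<alpha>/3))"
    by (simp add: powr_mult)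
  also have "\<dots> \<le> (a powr (-(\<alpha>/3)) + (2*pi - a) powr (-(\<alpha>/3))) *
      (b powr (-(\<alpha>/3)) + (2*pi - b) powr (-(\<alpha>/3))) *
      (c powr (-(\<alpha>/3)) + (2*pi - c) powr (-(\<alpha>/3)))"
    by (intro mult_mono dd_bound(3)[OF a] dd_bound(3)[OF b] dd_bound(3)[OF c] mult_nonneg_nonneg add_nonneg_nonneg powr_ge_zero)
  finally show ?thesis by (simp add: abc)
qed

lemma torus_cbox: "torus = cbox (0,0,0) (2*pi,2*pi,2*pi)"
  unfolding torus_def by (simp add: cbox_Pair_eq)
lemma torus_sets[measurable]: "torus \<in> sets lborel"
  unfolding torus_cbox by simp
lemma torus_fin: "emeasure lborel torus < \<infinity>"
  unfolding torus_cbox by (rule emeasure_lborel_cbox_finite)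

lemma fst_meas[measurable]: "(fst :: 'a::euclidean_space \<times> 'b::euclidean_space \<Rightarrow> 'a) \<in> borel_measurable borel"
  by (intro borel_measurable_continuous_onI continuous_intros)
lemma snd_meas[measurable]: "(snd :: 'a::euclidean_space \<times> 'b::euclidean_space \<Rightarrow> 'b) \<in> borel_measurable borel"
  by (intro borel_measurable_continuous_onI continuous_intros)
lemma symb_meas[measurable]: "symb \<in> borel_measurable borel"
  unfolding symb_def by (intro borel_measurable_continuous_onI continuous_intros)

lemma symb_nonneg: "0 \<le> symb k"
proof -
  have "cos (fst k) \<le> 1" "cos (fst (snd k)) \<le> 1" "cos (snd (snd k)) \<le> 1" by auto
  then have "cos (fst k) + cos (fst (snd k)) + cos (snd (snd k)) \<le> 3" by linarith
  then show ?thesis unfolding symb_def by (simp add: algebra_simps)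
qed

lemma Phi_pos: "0 \<le> t \<Longrightarrow> t \<le> 2*pi \<Longrightarrow> Phi \<beta> t \<noteq> 0"
  by (auto simp: Phi_def add_pos_nonneg)

lemma pt_bound:
  assumes "0 < \<alpha>" "\<alpha> < 3"
  shows "ennreal (indicator torus k * symb k powr (-\<alpha>/2)) \<le> ennreal (6 powr (\<alpha>/2)) *
     (Phi (\<alpha>/3) (fst k) * (Phi (\<alpha>/3) (fst (snd k)) * Phi (\<alpha>/3) (snd (snd k))))"
proof (cases "k \<in> torus")
  case False then show ?thesis by simp
next
  case True
  then have k: "0 \<le> fst k" "fst k \<le> 2*pi" "0 \<le> fst (snd k)" "fst (snd k) \<le> 2*pi"
     "0 \<le> snd (snd k)" "snd (snd k) \<le> 2*pi" by (auto simp: torus_def mem_Times_iff)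
  show ?thesis
  proof (cases "0 < fst k \<and> fst k < 2*pi \<and> 0 < fst (snd k) \<and> fst (snd k) < 2*pi \<and> 0 < snd (snd k) \<and> snd (snd k) < 2*pi")
    case inn: True
    have "symb k powr (-\<alpha>/2) \<le> 6 powr (\<alpha>/2) *
      ((fst k powr (-(\<alpha>/3)) + (2*pi - fst k) powr (-(\<alpha>/3))) *
      ((fst (snd k) powr (-(\<alpha>/3)) + (2*pi - fst (snd k)) powr (-(\<alpha>/3))) *
       (snd (snd k) powr (-(\<alpha>/3)) + (2*pi - snd (snd k)) powr (-(\<alpha>/3)))))"
      using symb_bound[OF assms] inn by (simp add: mult.assoc)
    moreover
    define A where "A = fst k powr (-(\<alpha>/3)) + (2*pi - fst k) powr (-(\<alpha>/3))"
    define B where "B = fst (snd k) powr (-(\<alpha>/3)) + (2*pi - fst (snd k)) powr (-(\<alpha>/3))"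
    define C where "C = snd (snd k) powr (-(\<alpha>/3)) + (2*pi - snd (snd k)) powr (-(\<alpha>/3))"
    have ABC: "A \<ge> 0" "B \<ge> 0" "C \<ge> 0" by (simp_all add: A_def B_def C_def)
    have P: "Phi (\<alpha>/3) (fst k) = ennreal A" "Phi (\<alpha>/3) (fst (snd k)) = ennreal B" "Phi (\<alpha>/3) (snd (snd k)) = ennreal C"
      using inn by (simp_all add: Phi_def A_def B_def C_def)
    have "ennreal (6 powr (\<alpha>/2)) * (ennreal A * (ennreal B * ennreal C)) = ennreal (6 powr (\<alpha>/2) * (A * (B * C)))"
      using ABC by (simp add: ennreal_mult)
    ultimately show ?thesis using True unfolding P A_def[symmetric] B_def[symmetric] C_def[symmetric]
      by (simp add: ennreal_leI)
  next
    case False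
    have nz: "Phi (\<alpha>/3) (fst k) \<noteq> 0" "Phi (\<alpha>/3) (fst (snd k)) \<noteq> 0" "Phi (\<alpha>/3) (snd (snd k)) \<noteq> 0"
      using k Phi_pos by auto
    have "Phi (\<alpha>/3) (fst k) = top \<or> Phi (\<alpha>/3) (fst (snd k)) = top \<or> Phi (\<alpha>/3) (snd (snd k)) = top"
      using False k unfolding Phi_def by auto
    then have "Phi (\<alpha>/3) (fst k) * (Phi (\<alpha>/3) (fst (snd k)) * Phi (\<alpha>/3) (snd (snd k))) = top"
      using nz by (auto simp: ennreal_mult_eq_top_iff)
    moreover have "ennreal (6 powr (\<alpha>/2)) \<noteq> 0" by simp
    ultimately show ?thesis by simp
  qed
qed

lemma pm2: "(\<lambda>k::real\<times>real. Phi b (fst k) * Phi b (snd k)) \<in> borel_measurable borel"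
  using Phi_meas by (intro borel_measurable_times_ennreal measurable_compose[OF fst_meas] measurable_compose[OF snd_meas])

lemma pm3: "(\<integral>\<^sup>+k. Phi b (fst k) * (Phi b (fst (snd k)) * Phi b (snd (snd k))) \<partial>lborel) = (\<integral>\<^sup>+t. Phi b t \<partial>lborel) ^ 3"
proof -
  have "(\<integral>\<^sup>+k. Phi b (fst k) * (Phi b (fst (snd k)) * Phi b (snd (snd k))) \<partial>lborel)
     = (\<integral>\<^sup>+t. Phi b t \<partial>lborel) * (\<integral>\<^sup>+k. Phi b (fst k) * Phi b (snd k) \<partial>lborel)"
    using nn_prod[OF Phi_meas pm2, of b b] by simp
  also have "(\<integral>\<^sup>+k. Phi b (fst (k::real\<times>real)) * Phi b (snd k) \<partial>lborel)
     = (\<integral>\<^sup>+t. Phi b t \<partial>lborel) * (\<integral>\<^sup>+t. Phi b t \<partial>lborel)"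
    using nn_prod[OF Phi_meas Phi_meas, of b b] by simp
  finally show ?thesis by (simp add: power3_eq_cube mult.assoc)
qed

lemma g_int:
  assumes "0 < \<alpha>" "\<alpha> < 3"
  shows "set_integrable lborel torus (\<lambda>k. symb k powr (-\<alpha>/2))"
  unfolding set_integrable_def
proof (rule integrableI_bounded)
  show "(\<lambda>k. indicator torus k *\<^sub>R symb k powr (-\<alpha>/2)) \<in> borel_measurable lborel" by measurable
  have "(\<integral>\<^sup>+k. ennreal (norm (indicator torus k *\<^sub>R symb k powr (-\<alpha>/2))) \<partial>lborel)
     \<le> (\<integral>\<^sup>+k. ennreal (6 powr (\<alpha>/2)) *
     (Phi (\<alpha>/3) (fst k) * (Phi (\<alpha>/3) (fst (snd k)) * Phi (\<alpha>/3) (snd (snd k)))) \<partial>lborel)"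
    using pt_bound[OF assms] by (intro nn_integral_mono) (simp add: indicator_def)
  also have "\<dots> = ennreal (6 powr (\<alpha>/2)) * (\<integral>\<^sup>+k. Phi (\<alpha>/3) (fst k) * (Phi (\<alpha>/3) (fst (snd k)) * Phi (\<alpha>/3) (snd (snd k))) \<partial>lborel)"
    by (rule nn_integral_cmult) measurable
  also have "(\<integral>\<^sup>+k. Phi (\<alpha>/3) (fst k) * (Phi (\<alpha>/3) (fst (snd k)) * Phi (\<alpha>/3) (snd (snd k))) \<partial>lborel)
     = (\<integral>\<^sup>+t. Phi (\<alpha>/3) t \<partial>lborel) ^ 3" by (rule pm3)
  finally show "(\<integral>\<^sup>+k. ennreal (norm (indicator torus k *\<^sub>R symb k powr (-\<alpha>/2))) \<partial>lborel) < \<infinity>"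
    using Phi_fin[of "\<alpha>/3"] assms by (simp add: ennreal_mult_less_top power_less_top_ennreal order.strict_trans1)
qed

definition BB :: "(real \<times> real \<times> real) set" where
  "BB = {pi/2..3*pi/2} \<times> {pi/2..3*pi/2} \<times> {pi/2..3*pi/2}"

lemma BB_cbox: "BB = cbox (pi/2,pi/2,pi/2) (3*pi/2,3*pi/2,3*pi/2)"
  unfolding BB_def by (simp add: cbox_Pair_eq)

lemma BB_meas: "measure lborel BB = pi^3"
  unfolding BB_cbox by (simp add: measure_lborel_cbox_eq Basis_prod_def inner_prod_def power3_eq_cube)

lemma BB_sets[measurable]: "BB \<in> sets lborel" unfolding BB_cbox by simp
lemma BB_fin: "emeasure lborel BB < \<infinity>" unfolding BB_cbox by (rule emeasure_lborel_cbox_finite)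

lemma BB_sub: "BB \<subseteq> torus"
  unfolding BB_def torus_def by (auto simp: mem_Times_iff)

lemma cos_BB: assumes "pi/2 \<le> x" "x \<le> 3*pi/2" shows "cos x \<le> 0"
proof -
  have "0 \<le> cos (x - pi)" using assms by (intro cos_ge_zero) auto
  then show ?thesis by simp
qed

lemma symb_BB: assumes "k \<in> BB" shows "6 \<le> symb k"
proof -
  have "cos (fst k) \<le> 0" "cos (fst (snd k)) \<le> 0" "cos (snd (snd k)) \<le> 0"
    using assms by (auto simp: BB_def mem_Times_iff intro!: cos_BB)
  then show ?thesis unfolding symb_def by (simp add: algebra_simps)
qed

lemma symb_le: "symb k \<le> 12"
proof -
  have "-1 \<le> cos (fst k)" "-1 \<le> cos (fst (snd k))" "-1 \<le> cos (snd (snd k))" by auto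
  then show ?thesis unfolding symb_def by (smt (verit))
qed

lemma int_pos:
  fixes \<phi> :: "real \<times> real \<times> real \<Rightarrow> real" and c :: real
  assumes "set_integrable lborel torus \<phi>" "\<And>k. k \<in> torus \<Longrightarrow> 0 \<le> \<phi> k"
    "\<And>k. k \<in> BB \<Longrightarrow> c \<le> \<phi> k" "0 < c"
  shows "(LINT k:torus|lborel. \<phi> k) > 0"
proof -
  have "0 < c * pi^3" using assms(4) by simp
  also have "c * pi^3 = integral\<^sup>L lborel (\<lambda>k. c * indicator BB k)"
    using BB_meas BB_sets BB_fin by simp
  also have "\<dots> \<le> integral\<^sup>L lborel (\<lambda>k. indicator torus k *\<^sub>R \<phi> k)"
  proof (rule integral_mono)
    show "integrable lborel (\<lambda>k. c * indicat_real BB k)" using BB_sets BB_fin by simp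
    show "integrable lborel (\<lambda>k. indicator torus k *\<^sub>R \<phi> k)" using assms(1) by (simp add: set_integrable_def)
    fix k show "c * indicat_real BB k \<le> indicator torus k *\<^sub>R \<phi> k"
      using assms(2,3)[of k] BB_sub by (auto simp: indicator_def)
  qed
  finally show ?thesis by (simp add: set_lebesgue_integral_def)
qed

lemma s_int: assumes "0 < \<alpha>" shows "set_integrable lborel torus (\<lambda>k. symb k powr (\<alpha>/2))"
  unfolding set_integrable_def
proof (rule integrableI_bounded_set_indicator[where B="12 powr (\<alpha>/2)"])
  show "(\<lambda>k. symb k powr (\<alpha>/2)) \<in> borel_measurable lborel" by measurable
  show "AE x in lborel. x \<in> torus \<longrightarrow> norm (symb x powr (\<alpha>/2)) \<le> 12 powr (\<alpha>/2)"
    using assms symb_le symb_nonneg by (auto intro!: powr_mono2)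
qed (use torus_fin torus_sets in auto)

lemma K_pos: assumes "0 < \<alpha>" shows "K_const \<alpha> > 0"
proof -
  have "(LINT k:torus|lborel. symb k powr (\<alpha>/2)) > 0"
  proof (rule int_pos[OF s_int[OF assms], of 1])
    fix k assume "k \<in> BB" then show "1 \<le> symb k powr (\<alpha>/2)"
      using symb_BB[of k] assms by (intro ge_one_powr_ge_zero) auto
  qed auto
  then show ?thesis by (simp add: K_const_def)
qed

lemma Ig_pos: assumes "0 < \<alpha>" "\<alpha> < 3" shows "(LINT k:torus|lborel. symb k powr (-\<alpha>/2)) > 0"
proof (rule int_pos[OF g_int[OF assms], of "12 powr (-\<alpha>/2)"])
  fix k assume "k \<in> BB" then show "12 powr (-\<alpha>/2) \<le> symb k powr (-\<alpha>/2)"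
    using symb_BB[of k] symb_le[of k] assms by (intro powr_mono2') auto
qed auto

lemma R_diag: assumes "0 < \<alpha>" "\<alpha> < 3" shows "R_alpha \<alpha> x x > 0"
proof -
  have l: "ldot (x - x) k = 0" for k by (simp add: ldot_def)
  have "R_alpha \<alpha> x x = K_const \<alpha> / (2*pi)^3 * (LINT k:torus|lborel. symb k powr (-\<alpha>/2))"
    unfolding R_alpha_def R_c_def l by (simp add: set_integral_complex_of_real)
  then show ?thesis using K_pos[OF assms(1)] Ig_pos[OF assms] by simp
qed

definition Mb :: "real \<Rightarrow> real" where
  "Mb \<alpha> = \<bar>K_const \<alpha> / (2*pi)^3\<bar> * integral\<^sup>L lborel (\<lambda>k. norm (indicator torus k *\<^sub>R symb k powr (-\<alpha>/2)))"

lemma Mb_nonneg: "0 \<le> Mb \<alpha>" unfolding Mb_def by (intro mult_nonneg_nonneg integral_nonneg_AE) auto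

lemma R_bound: "\<bar>R_alpha \<alpha> x y\<bar> \<le> Mb \<alpha>"
proof -
  let ?f = "\<lambda>k. indicator torus k *\<^sub>R (cis (ldot (x - y) k) * complex_of_real (symb k powr (-\<alpha>/2)))"
  have "\<bar>R_alpha \<alpha> x y\<bar> \<le> norm (R_c \<alpha> x y)" unfolding R_alpha_def by (rule abs_Re_le_cmod)
  also have "\<dots> = \<bar>K_const \<alpha> / (2*pi)^3\<bar> * norm (integral\<^sup>L lborel ?f)"
    unfolding R_c_def set_lebesgue_integral_def by (simp only: norm_mult norm_of_real)
  also have "\<dots> \<le> \<bar>K_const \<alpha> / (2*pi)^3\<bar> * integral\<^sup>L lborel (\<lambda>k. norm (?f k))"
    by (intro mult_left_mono integral_norm_bound) auto
  also have "integral\<^sup>L lborel (\<lambda>k. norm (?f k)) = integral\<^sup>L lborel (\<lambda>k. norm (indicator torus k *\<^sub>R symb k powr (-\<alpha>/2)))"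
    by (intro Bochner_Integration.integral_cong) (auto simp: norm_mult indicator_def)
  finally show ?thesis unfolding Mb_def .
qed

lemma abs_infsum_le:
  fixes f g :: "'a \<Rightarrow> real"
  assumes "g summable_on A" "\<And>x. x \<in> A \<Longrightarrow> \<bar>f x\<bar> \<le> g x"
  shows "\<bar>infsum f A\<bar> \<le> infsum g A" "f summable_on A"
proof -
  have ga: "(\<lambda>x. norm (g x)) summable_on A" using assms(1) summable_on_iff_abs_summable_on_real by blast
  have "(\<lambda>x. norm (f x)) summable_on A"
    by (rule Infinite_Sum.abs_summable_on_comparison_test'[OF assms(1)]) (use assms(2) in force)
  then show fs: "f summable_on A" using summable_on_iff_abs_summable_on_real by blast
  show "\<bar>infsum f A\<bar> \<le> infsum g A"
    using norm_infsum_le[OF has_sum_infsum[OF fs] has_sum_infsum[OF assms(1)]] assms(2) by simp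
qed

lemma single_le:
  fixes f :: "'a \<Rightarrow> real"
  assumes "f summable_on UNIV" "\<And>x. 0 \<le> f x"
  shows "f a \<le> infsum f UNIV"
proof -
  have "infsum f {a} \<le> infsum f UNIV"
    by (rule infsum_mono_neutral) (use assms in auto)
  then show ?thesis by simp
qed

lemma fin_supp_sum:
  fixes f :: "'a \<Rightarrow> real"
  assumes "finite A" "\<And>x. x \<notin> A \<Longrightarrow> f x = 0"
  shows "f summable_on UNIV" "infsum f UNIV = sum f A"
proof -
  have "f summable_on A" using assms(1) by simp
  then show "f summable_on UNIV"
    using summable_on_cong_neutral[of UNIV A f f] assms(2) by auto
  have "infsum f UNIV = infsum f A"
    by (rule infsum_cong_neutral) (use assms(2) in auto)
  then show "infsum f UNIV = sum f A" using assms(1) by simp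
qed

lemma grad_scale: "grad_norm (\<lambda>z. t * v z) x = \<bar>t\<bar> * grad_norm v x"
proof -
  have "(\<Sum>y\<in>{y. adj x y}. (t * v y - t * v x)^2) = t^2 * (\<Sum>y\<in>{y. adj x y}. (v y - v x)^2)"
    by (simp add: sum_distrib_left power_mult_distrib right_diff_distrib[symmetric])
  then have "(1/2) * (\<Sum>y\<in>{y. adj x y}. (t * v y - t * v x)^2) = t^2 * ((1/2) * (\<Sum>y\<in>{y. adj x y}. (v y - v x)^2))"
    by simp
  then show ?thesis unfolding grad_norm_def
    by (simp only: real_sqrt_mult real_sqrt_abs)
qed

definition Aset :: "lat set" where "Aset = {x. x = 0 \<or> adj x 0}"

lemma Aset_fin: "finite Aset"
proof -
  have "Aset \<subseteq> {-1..1} \<times> {-1..1} \<times> {-1..1}"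
    by (auto simp: Aset_def adj_def mem_Times_iff zero_prod_def)
  then show ?thesis by (rule finite_subset) simp
qed

definition dl :: "lat \<Rightarrow> real" where "dl x = (if x = 0 then 1 else 0)"

lemma grad_dl: "x \<notin> Aset \<Longrightarrow> grad_norm dl x = 0"
proof -
  assume x: "x \<notin> Aset"
  have "(\<Sum>y\<in>{y. adj x y}. (dl y - dl x)^2) = 0"
    by (rule sum.neutral) (use x in \<open>auto simp: Aset_def dl_def\<close>)
  then show ?thesis by (simp add: grad_norm_def)
qed

lemma zero_Aset: "0 \<in> Aset" by (simp add: Aset_def)

lemma part2:
  fixes a b \<alpha> p h0 \<rho> :: real and h :: "lat \<Rightarrow> real"
  assumes "a > 0" and "b > 0" and "0 < \<alpha>" and "\<alpha> < 3" and "p > 2"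
    and "h0 > 0" and hh: "\<forall>x. h x \<ge> h0"
  shows "\<exists>e \<in> Hsp a h. Hnorm a h e > \<rho> \<and> Jfun a b \<alpha> p h e < 0"
proof -
  define G0 where "G0 = (\<Sum>x\<in>Aset. (grad_norm dl x)^2)"
  define N0 where "N0 = (\<Sum>x\<in>Aset. a * (grad_norm dl x)^2 + h x * (dl x)^2)"
  have "a * (grad_norm dl 0)^2 + h 0 * (dl 0)^2 \<le> N0"
    unfolding N0_def using hh assms(1,6) Aset_fin zero_Aset
    by (intro member_le_sum add_nonneg_nonneg mult_nonneg_nonneg) (auto intro: order.trans[OF less_imp_le[OF assms(6)]])
  then have N0: "N0 \<ge> h0" using hh[rule_format, of 0] assms(1) by (simp add: dl_def) (smt (verit) mult_nonneg_nonneg zero_le_power2)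
  have N0p: "N0 > 0" using N0 assms(6) by linarith
  define R0 where "R0 = R_alpha \<alpha> 0 0"
  have R0: "R0 > 0" unfolding R0_def by (rule R_diag[OF assms(3,4)])
  define Q where "Q = N0/2 + b*G0^2/4 + 1"
  have Qp: "Q > 0" unfolding Q_def using N0p assms(2) by (simp add: add_pos_nonneg)
  define C where "C = 2*p*Q/R0"
  have Cp: "C > 0" unfolding C_def using Qp R0 assms(5) by simp
  define t where "t = max 1 (max (\<rho>/sqrt N0 + 1) (C powr (1/(2*p-4))))"
  have t1: "t \<ge> 1" and t2: "t > \<rho>/sqrt N0" and t3: "t \<ge> C powr (1/(2*p-4))"
    unfolding t_def by auto
  have tp: "t > 0" using t1 by linarith
  define e where "e = (\<lambda>x. t * dl x)"
  have e0: "x \<notin> Aset \<Longrightarrow> e x = 0" for x using zero_Aset by (auto simp: e_def dl_def)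
  have ge: "grad_norm e x = t * grad_norm dl x" for x
    unfolding e_def grad_scale using tp by simp
  have gz: "x \<notin> Aset \<Longrightarrow> grad_norm e x = 0" for x using ge grad_dl by simp
  have sG: "(\<lambda>x. (grad_norm e x)^2) summable_on UNIV" "infsum (\<lambda>x. (grad_norm e x)^2) UNIV = t^2 * G0"
    using fin_supp_sum[OF Aset_fin, of "\<lambda>x. (grad_norm e x)^2"] gz
    by (auto simp: G0_def ge sum_distrib_left power_mult_distrib)
  have sN1: "(\<lambda>x. a * (grad_norm e x)^2 + h x * (e x)^2) summable_on UNIV"
     "infsum (\<lambda>x. a * (grad_norm e x)^2 + h x * (e x)^2) UNIV = (\<Sum>x\<in>Aset. a * (grad_norm e x)^2 + h x * (e x)^2)"
    using fin_supp_sum[OF Aset_fin, of "\<lambda>x. a * (grad_norm e x)^2 + h x * (e x)^2"] gz e0 by auto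
  have "(\<Sum>x\<in>Aset. a * (grad_norm e x)^2 + h x * (e x)^2) = (\<Sum>x\<in>Aset. t^2 * (a * (grad_norm dl x)^2 + h x * (dl x)^2))"
  proof (intro sum.cong refl)
    fix x
    have "(grad_norm e x)^2 = t^2 * (grad_norm dl x)^2" unfolding ge by (simp add: power_mult_distrib)
    moreover have "(e x)^2 = t^2 * (dl x)^2" by (simp add: e_def power_mult_distrib)
    ultimately
    show "a * (grad_norm e x)^2 + h x * (e x)^2 = t^2 * (a * (grad_norm dl x)^2 + h x * (dl x)^2)"
      by (simp add: algebra_simps)
  qed
  also have "\<dots> = t^2 * N0" by (simp add: N0_def sum_distrib_left)
  finally have sN: "infsum (\<lambda>x. a * (grad_norm e x)^2 + h x * (e x)^2) UNIV = t^2 * N0"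
    using sN1(2) by simp
  have Hn: "Hnorm a h e = t * sqrt N0"
    unfolding Hnorm_def sN using tp N0p by (simp add: real_sqrt_mult)
  have Hgt: "Hnorm a h e > \<rho>"
    unfolding Hn using t2 N0p by (simp add: pos_divide_less_eq)
  have eH: "e \<in> Hsp a h"
    unfolding Hsp_def H1_def
  proof (intro CollectI conjI exI[of _ "\<lambda>n. e"] allI)
    show "(\<lambda>x. (grad_norm e x)^2 + (e x)^2) summable_on UNIV"
      using fin_supp_sum(1)[OF Aset_fin, of "\<lambda>x. (grad_norm e x)^2 + (e x)^2"] gz e0 by auto
    show "(\<lambda>x. h x * (e x)^2) summable_on UNIV"
      using fin_supp_sum(1)[OF Aset_fin, of "\<lambda>x. h x * (e x)^2"] e0 by auto
    show "fin_supp e" for n unfolding fin_supp_def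
      by (rule finite_subset[OF _ Aset_fin]) (use e0 in auto)
    have z: "grad_norm (\<lambda>z. 0) x = 0" for x by (simp add: grad_norm_def)
    show "(\<lambda>x. (grad_norm (\<lambda>z. e z - e z) x)^2 + (e x - e x)^2) summable_on UNIV" for n
      by (simp add: z)
    show "(\<lambda>n. \<Sum>\<^sub>\<infinity>x. (grad_norm (\<lambda>z. e z - e z) x)^2 + (e x - e x)^2) \<longlonglongrightarrow> 0"
      by (simp add: z)
  qed
  define F where "F = (\<lambda>y. \<bar>e y\<bar> powr p)"
  have F: "F y = (if y = 0 then t powr p else 0)" for y
    using tp assms(5) by (auto simp: F_def e_def dl_def)
  have cv: "conv \<alpha> F x = R_alpha \<alpha> x 0 * t powr p" for x
  proof -
    have "conv \<alpha> F x = sum (\<lambda>y. R_alpha \<alpha> x y * F y) {0}"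
      unfolding conv_def by (rule fin_supp_sum(2)) (auto simp: F)
    then show ?thesis by (simp add: F)
  qed
  have NL: "(\<Sum>\<^sub>\<infinity>x. conv \<alpha> F x * F x) = R0 * (t powr p * t powr p)"
  proof -
    have "(\<Sum>\<^sub>\<infinity>x. conv \<alpha> F x * F x) = sum (\<lambda>x. conv \<alpha> F x * F x) {0}"
      by (rule fin_supp_sum(2)) (auto simp: F)
    then show ?thesis by (simp add: F cv R0_def)
  qed
  have pw: "t powr p * t powr p = t^4 * t powr (2*p-4)"
  proof -
    have "t powr p * t powr p = t powr (4 + (2*p-4))" by (simp add: powr_add[symmetric])
    also have "\<dots> = t powr 4 * t powr (2*p-4)" by (rule powr_add)
    also have "t powr 4 = t^4" using powr_realpow[OF tp, of 4] by simp
    finally show ?thesis .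
  qed
  have X: "t powr (2*p-4) \<ge> C"
  proof -
    have "(C powr (1/(2*p-4))) powr (2*p-4) \<le> t powr (2*p-4)"
      using t3 assms(5) by (intro powr_mono2) auto
    moreover have "(C powr (1/(2*p-4))) powr (2*p-4) = C"
      using Cp assms(5) by (simp add: powr_powr)
    ultimately show ?thesis by simp
  qed
  have NL2: "(\<Sum>\<^sub>\<infinity>x. conv \<alpha> (\<lambda>y. \<bar>e y\<bar> powr p) x * \<bar>e x\<bar> powr p) = R0 * (t^4 * t powr (2*p-4))"
    using NL pw unfolding F_def by simp
  have J: "Jfun a b \<alpha> p h e = t^2 * N0 / 2 + b/4 * (t^2 * G0)^2 - 1/(2*p) * (R0 * (t^4 * t powr (2*p-4)))"
    unfolding Jfun_def NL2 sG(2) Hn using N0p by (simp add: power_mult_distrib)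
  have t24: "t^2 \<le> t^4" using t1 by (simp add: power_increasing)
  have A1: "t^2 * N0 / 2 \<le> t^4 * N0 / 2" using t24 N0p by (simp add: mult_right_mono)
  have tt: "(t^2)^2 = t^4" by (simp flip: power_mult)
  have A2: "b/4 * (t^2 * G0)^2 = t^4 * (b*G0^2/4)" by (simp only: power_mult_distrib tt) (simp add: algebra_simps)
  have A3: "1/(2*p) * (R0 * (t^4 * t powr (2*p-4))) \<ge> 1/(2*p) * (R0 * (t^4 * C))"
    using X R0 assms(5) by (intro mult_left_mono) auto
  have A4: "1/(2*p) * (R0 * (t^4 * C)) = t^4 * Q"
    unfolding C_def using R0 assms(5) by (simp add: field_simps)
  have "Jfun a b \<alpha> p h e \<le> t^4 * (N0/2 + b*G0^2/4) - t^4 * Q"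
    unfolding J using A1 A2 A3 A4 by (simp add: algebra_simps)
  also have "\<dots> = -(t^4)" by (simp add: Q_def algebra_simps)
  also have "\<dots> < 0" using tp by simp
  finally show ?thesis using eH Hgt by blast
qed

lemma part1:
  fixes a b \<alpha> p h0 \<rho> :: real and h :: "lat \<Rightarrow> real" and u :: "lat \<Rightarrow> real"
  assumes "a > 0" and "b > 0" and "p > 2" and h0: "h0 > 0" and hh: "\<forall>x. h x \<ge> h0"
    and u: "u \<in> Hsp a h" and un: "Hnorm a h u = \<rho>" and rp: "\<rho> > 0" and r1: "\<rho>^2 \<le> h0"
    and r2: "2 * Mb \<alpha> * \<rho>^2 \<le> p * h0^2"
  shows "Jfun a b \<alpha> p h u \<ge> \<rho>^2/4"
proof -
  define G where "G = (\<lambda>x. (grad_norm u x)^2)"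
  define U2 where "U2 = (\<lambda>x. (u x)^2)"
  have s1: "(\<lambda>x. G x + U2 x) summable_on UNIV" and s2: "(\<lambda>x. h x * U2 x) summable_on UNIV"
    using u by (auto simp: Hsp_def H1_def G_def U2_def)
  have G0: "0 \<le> G x" "0 \<le> U2 x" for x by (auto simp: G_def U2_def)
  have hp: "0 < h x" for x using hh h0 by (meson less_le_trans)
  have sG: "G summable_on UNIV"
    by (rule summable_on_comparison_test[OF s1]) (use G0 in auto)
  have sU: "U2 summable_on UNIV"
    by (rule summable_on_comparison_test[OF s1]) (use G0 in auto)
  have sN: "(\<lambda>x. a * G x + h x * U2 x) summable_on UNIV"
    by (intro summable_on_add summable_on_cmult_right sG s2)
  define N where "N = infsum (\<lambda>x. a * G x + h x * U2 x) UNIV"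
  have sN\<rho>: "sqrt N = \<rho>" using un by (simp add: Hnorm_def N_def G_def U2_def)
  have N0: "0 \<le> N" unfolding N_def using G0 hp assms(1) by (intro infsum_nonneg add_nonneg_nonneg mult_nonneg_nonneg) (auto intro: less_imp_le)
  have N: "N = \<rho>^2" using real_sqrt_pow2[OF N0] unfolding sN\<rho> by (rule sym)
  define U where "U = infsum U2 UNIV"
  have "h0 * U = infsum (\<lambda>x. h0 * U2 x) UNIV" unfolding U_def by (simp add: infsum_cmult_right sU)
  also have "\<dots> \<le> N" unfolding N_def
  proof (rule infsum_mono)
    show "(\<lambda>x. h0 * U2 x) summable_on UNIV" by (intro summable_on_cmult_right sU)
    show "(\<lambda>x. a * G x + h x * U2 x) summable_on UNIV" by (rule sN)
    fix x show "h0 * U2 x \<le> a * G x + h x * U2 x"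
      using G0[of x] hh assms(1) by (smt (verit) mult_nonneg_nonneg mult_right_mono)
  qed
  finally have hU: "h0 * U \<le> \<rho>^2" using N by simp
  have U0: "0 \<le> U" unfolding U_def using G0 by (intro infsum_nonneg) auto
  have U1: "U \<le> \<rho>^2 / h0" using hU h0 by (simp add: field_simps mult.commute)
  have Ule1: "U \<le> 1" using U1 r1 h0 by (smt (verit) divide_le_eq_1_pos)
  define V where "V = sqrt U"
  have V0: "0 \<le> V" "V \<le> 1" using U0 Ule1 by (auto simp: V_def)
  have ux: "\<bar>u x\<bar> \<le> V" for x
  proof -
    have "U2 x \<le> U" unfolding U_def by (rule single_le[OF sU]) (use G0 in auto)
    then show ?thesis unfolding V_def U2_def by (metis real_sqrt_abs real_sqrt_le_mono)
  qed
  define F where "F = (\<lambda>y. \<bar>u y\<bar> powr p)"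
  have F0: "0 \<le> F x" for x by (simp add: F_def)
  have Fb: "F x \<le> U2 x" for x
  proof -
    have "F x = \<bar>u x\<bar> powr ((p-2) + 2)" unfolding F_def by simp
    also have "\<dots> = \<bar>u x\<bar> powr (p-2) * \<bar>u x\<bar> powr 2" by (rule powr_add)
    also have "\<bar>u x\<bar> powr 2 = U2 x"
    proof (cases "u x = 0")
      case True then show ?thesis by (simp add: U2_def)
    next
      case False
      then have "\<bar>u x\<bar> > 0" by simp
      from powr_realpow[OF this, of 2] show ?thesis by (simp add: U2_def)
    qed
    also have "\<bar>u x\<bar> powr (p-2) \<le> 1"
      using ux[of x] V0 assms(3) by (intro powr_le1) auto
    then have "\<bar>u x\<bar> powr (p-2) * U2 x \<le> 1 * U2 x" using G0[of x] by (intro mult_right_mono) auto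
    finally show ?thesis by simp
  qed
  have sF: "F summable_on UNIV" by (rule summable_on_comparison_test[OF sU]) (use F0 Fb in auto)
  have SF: "infsum F UNIV \<le> U" unfolding U_def by (rule infsum_mono[OF sF sU]) (use Fb in auto)
  have SF0: "0 \<le> infsum F UNIV" using F0 by (intro infsum_nonneg) auto
  have M0: "0 \<le> Mb \<alpha>" by (rule Mb_nonneg)
  have cb: "\<bar>conv \<alpha> F x\<bar> \<le> Mb \<alpha> * U" for x
  proof -
    have "\<bar>conv \<alpha> F x\<bar> \<le> infsum (\<lambda>y. Mb \<alpha> * F y) UNIV"
      unfolding conv_def
    proof (rule abs_infsum_le(1))
      show "(\<lambda>y. Mb \<alpha> * F y) summable_on UNIV" by (intro summable_on_cmult_right sF)
      fix y show "\<bar>R_alpha \<alpha> x y * F y\<bar> \<le> Mb \<alpha> * F y"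
        using R_bound[of \<alpha> x y] F0[of y] by (simp add: abs_mult mult_right_mono)
    qed
    also have "\<dots> = Mb \<alpha> * infsum F UNIV" by (simp add: infsum_cmult_right sF)
    also have "\<dots> \<le> Mb \<alpha> * U" using SF M0 by (intro mult_left_mono)
    finally show ?thesis .
  qed
  have NLb: "\<bar>\<Sum>\<^sub>\<infinity>x. conv \<alpha> F x * F x\<bar> \<le> Mb \<alpha> * U * U"
  proof -
    have "\<bar>\<Sum>\<^sub>\<infinity>x. conv \<alpha> F x * F x\<bar> \<le> infsum (\<lambda>x. Mb \<alpha> * U * F x) UNIV"
    proof (rule abs_infsum_le(1))
      show "(\<lambda>x. Mb \<alpha> * U * F x) summable_on UNIV" by (intro summable_on_cmult_right sF)
      fix x show "\<bar>conv \<alpha> F x * F x\<bar> \<le> Mb \<alpha> * U * F x"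
        using cb[of x] F0[of x] by (simp add: abs_mult mult_right_mono)
    qed
    also have "\<dots> = Mb \<alpha> * U * infsum F UNIV" by (simp add: infsum_cmult_right sF)
    also have "\<dots> \<le> Mb \<alpha> * U * U" using SF M0 U0 by (intro mult_left_mono) auto
    finally show ?thesis .
  qed
  have UU: "U * U \<le> (\<rho>^2/h0) * (\<rho>^2/h0)" using U0 U1 by (intro mult_mono) auto
  have NL: "(\<Sum>\<^sub>\<infinity>x. conv \<alpha> F x * F x) \<le> Mb \<alpha> * ((\<rho>^2/h0) * (\<rho>^2/h0))"
    using NLb UU M0 by (smt (verit) mult.assoc mult_left_mono)
  have key: "Mb \<alpha> * ((\<rho>^2/h0) * (\<rho>^2/h0)) / (2*p) \<le> \<rho>^2/4"
  proof -
    have "Mb \<alpha> * ((\<rho>^2/h0) * (\<rho>^2/h0)) / (2*p) = (2 * Mb \<alpha> * \<rho>^2) * \<rho>^2 / (4 * p * h0^2)"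
      using h0 assms(3) by (simp add: field_simps power2_eq_square)
    also have "\<dots> \<le> (p * h0^2) * \<rho>^2 / (4 * p * h0^2)"
      using r2 h0 assms(3) by (intro divide_right_mono mult_right_mono) auto
    also have "\<dots> = \<rho>^2/4" using h0 assms(3) by (simp add: field_simps)
    finally show ?thesis .
  qed
  have gterm: "0 \<le> (b/4) * (\<Sum>\<^sub>\<infinity>x. (grad_norm u x)^2)^2" using assms(2) by simp
  have "Jfun a b \<alpha> p h u = (1/2) * \<rho>^2 + (b/4) * (\<Sum>\<^sub>\<infinity>x. (grad_norm u x)^2)^2
      - (1/(2*p)) * (\<Sum>\<^sub>\<infinity>x. conv \<alpha> F x * F x)"
    unfolding Jfun_def un F_def ..
  also have "\<dots> \<ge> (1/2) * \<rho>^2 - Mb \<alpha> * ((\<rho>^2/h0) * (\<rho>^2/h0)) / (2*p)"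
    using gterm NL assms(3) by (smt (verit) divide_right_mono mult.commute divide_inverse_commute inverse_eq_divide times_divide_eq_right mult_left_mono)
  finally show ?thesis using key by linarith
qed

theorem lemma3p1:
  fixes a b \<alpha> p h0 :: real and h :: "lat \<Rightarrow> real"
  assumes "a > 0" and "b > 0" and "0 < \<alpha>" and "\<alpha> < 3" and "p > 2"
    and "h0 > 0" and "\<forall>x. h x \<ge> h0"
  shows "\<exists>\<theta> \<rho>. \<theta> > 0 \<and> \<rho> > 0 \<and>
           (\<forall>u \<in> Hsp a h. Hnorm a h u = \<rho> \<longrightarrow> Jfun a b \<alpha> p h u \<ge> \<theta>) \<and>
           (\<exists>e \<in> Hsp a h. Hnorm a h e > \<rho> \<and> Jfun a b \<alpha> p h e < 0)"
proof -
  define m where "m = min h0 (p * h0^2 / (2 * (Mb \<alpha> + 1)))"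
  have M0: "0 \<le> Mb \<alpha>" by (rule Mb_nonneg)
  have mp: "m > 0" unfolding m_def using assms(5,6) M0 by simp
  define \<rho> where "\<rho> = sqrt m"
  have rp: "\<rho> > 0" unfolding \<rho>_def using mp by simp
  have r2: "\<rho>^2 = m" unfolding \<rho>_def using mp by simp
  have c1: "\<rho>^2 \<le> h0" unfolding r2 m_def by simp
  have c2: "2 * Mb \<alpha> * \<rho>^2 \<le> p * h0^2"
  proof -
    have "2 * Mb \<alpha> * \<rho>^2 \<le> 2 * Mb \<alpha> * (p * h0^2 / (2 * (Mb \<alpha> + 1)))"
      unfolding r2 m_def using M0 by (intro mult_left_mono) auto
    also have "\<dots> = (p * h0^2) * (Mb \<alpha> / (Mb \<alpha> + 1))" using M0 by (simp add: field_simps)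
    also have "\<dots> \<le> (p * h0^2) * 1" using M0 assms(5) by (intro mult_left_mono) auto
    finally show ?thesis by simp
  qed
  show ?thesis
  proof (intro exI conjI ballI impI)
    show "\<rho>^2/4 > 0" using rp by simp
    show "\<rho> > 0" by (rule rp)
    fix u assume "u \<in> Hsp a h" "Hnorm a h u = \<rho>"
    then show "Jfun a b \<alpha> p h u \<ge> \<rho>^2/4"
      using part1[OF assms(1,2,5,6,7) _ _ rp c1 c2] by blast
  next
    show "\<exists>e \<in> Hsp a h. Hnorm a h e > \<rho> \<and> Jfun a b \<alpha> p h e < 0"
      by (rule part2[OF assms])
  qed
qed

end
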